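(* Let $\mathcal{D}$ be a domain, let $a\in\mathrm{IET}(\mathcal{D})$ be stable, with irreducible components $I_1,\dots,I_r$. Let $g\in\mathrm{IET}(\mathcal{D})$ be such that $gag^{-1}$ commutes with $a$. Then for every $i$, either $g(I_i)$ is disjoint from $I_1\cup\dots\cup I_r$, or $g(I_i)=I_j$ for some $j$.
   Context: A domain is a non-empty disjoint union of finitely many oriented circles and oriented half-open bounded intervals closed on the left; a subdomain is a subset that is itself a domain. $\mathrm{IET}(\mathcal{D})$ is the group of bijections of $\mathcal{D}$ that are orientation-preserving piecewise isometries, left-continuous, with finitely many discontinuity points. For a finitely generated $G<\mathrm{IET}(\mathcal{D})$: $G$ is irreducible on a $G$-invariant subdomain $J$ if every $G$-orbit in $J$ is dense in $J$; the irreducible components of $G$ are the members of the unique finite collection of pairwise disjoint $G$-invariant subdomains on each of which $G$ is irreducible and such that $G$ acts as a finite group on the complement of their union. $G$ is stable if every subdomain invariant under a finite index subgroup of $G$ is $G$-invariant. An element $a$ is called stable (resp. irreducible) if $\langle a\rangle$ is stable (resp. irreducible on $\mathcal{D}$), and its irreducible components are those of $\langle a\rangle$. *)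

theory Defs
  imports "HOL-Analysis.Analysis"
begin

text \<open>Points of a domain are coded as pairs (k, x): component index k and
 coordinate x in [0, len k).  A circle of length L is coded by [0, L)
 (cut open at a base point).\<close>

definition box :: "nat \<Rightarrow> real \<Rightarrow> real \<Rightarrow> (nat \<times> real) set" where
  "box k a b = {k} \<times> {a..<b}"

definition is_domain :: "(nat \<times> real) set \<Rightarrow> bool" where
  "is_domain D \<longleftrightarrow> (\<exists>n len. n \<ge> 1 \<and> (\<forall>k<n. (0::real) < len k) \<and>
      D = (\<Union>k<n. box k 0 (len k)))"

definition subdomain :: "(nat \<times> real) set \<Rightarrow> (nat \<times> real) set \<Rightarrow> bool" where
  "subdomain D J \<longleftrightarrow> J \<subseteq> D \<and> J \<noteq> {} \<and>
     (\<exists>B. finite B \<and> (\<forall>(k,a,b)\<in>B. a < b) \<and> J = (\<Union>(k,a,b)\<in>B. box k a b))"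

definition IET :: "(nat \<times> real) set \<Rightarrow> ((nat \<times> real) \<Rightarrow> (nat \<times> real)) set" where
  "IET D = {f. bij_betw f D D \<and>
     (\<exists>P. finite P \<and> (\<forall>(k,a,b)\<in>P. a < b \<and> box k a b \<subseteq> D) \<and>
          D = (\<Union>(k,a,b)\<in>P. box k a b) \<and>
          (\<forall>(k,a,b)\<in>P. \<exists>k' c. \<forall>x\<in>{a..<b}. f (k, x) = (k', x + c)))}"

definition ipow :: "(nat \<times> real) set \<Rightarrow> ((nat \<times> real) \<Rightarrow> (nat \<times> real)) \<Rightarrow> int
    \<Rightarrow> (nat \<times> real) \<Rightarrow> (nat \<times> real)" where
  "ipow D f m = (if 0 \<le> m then f ^^ nat m else (inv_into D f) ^^ nat (- m))"

definition cyc_orbit :: "(nat \<times> real) set \<Rightarrow> ((nat \<times> real) \<Rightarrow> (nat \<times> real))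
    \<Rightarrow> (nat \<times> real) \<Rightarrow> (nat \<times> real) set" where
  "cyc_orbit D f p = {ipow D f m p | m. True}"

definition cyc_invariant :: "((nat \<times> real) \<Rightarrow> (nat \<times> real)) \<Rightarrow> (nat \<times> real) set \<Rightarrow> bool" where
  "cyc_invariant f J \<longleftrightarrow> f ` J = J"

text \<open>Stability of a: every subdomain invariant under a finite index subgroup
 (necessarily of the form generated by a^m, m \<ge> 1) is invariant under a.\<close>
definition stable_elem :: "(nat \<times> real) set \<Rightarrow> ((nat \<times> real) \<Rightarrow> (nat \<times> real)) \<Rightarrow> bool" where
  "stable_elem D a \<longleftrightarrow> (\<forall>m::nat. m \<ge> 1 \<longrightarrow> (\<forall>J. subdomain D J \<longrightarrow>
       cyc_invariant (a ^^ m) J \<longrightarrow> cyc_invariant a J))"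

definition irreducible_on :: "(nat \<times> real) set \<Rightarrow> ((nat \<times> real) \<Rightarrow> (nat \<times> real))
    \<Rightarrow> (nat \<times> real) set \<Rightarrow> bool" where
  "irreducible_on D a J \<longleftrightarrow> (\<forall>p\<in>J. J \<subseteq> closure (cyc_orbit D a p))"

definition irreducible_components :: "(nat \<times> real) set \<Rightarrow> ((nat \<times> real) \<Rightarrow> (nat \<times> real))
    \<Rightarrow> (nat \<times> real) set set \<Rightarrow> bool" where
  "irreducible_components D a C \<longleftrightarrow> finite C \<and>
     (\<forall>J\<in>C. subdomain D J \<and> cyc_invariant a J \<and> irreducible_on D a J) \<and>
     (\<forall>J\<in>C. \<forall>J'\<in>C. J \<noteq> J' \<longrightarrow> J \<inter> J' = {}) \<and>
     (\<exists>m::nat. m \<ge> 1 \<and> (\<forall>p \<in> D - \<Union>C. (a ^^ m) p = p))"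

end

theory Submission
  imports Defs
begin



lemma closure_pt:
  fixes S :: "(nat \<times> real) set"
  shows "(k, x) \<in> closure S \<longleftrightarrow> (\<forall>e>0. \<exists>y. (k, y) \<in> S \<and> \<bar>y - x\<bar> < e)"
proof
  assume h: "(k, x) \<in> closure S"
  show "\<forall>e>0. \<exists>y. (k, y) \<in> S \<and> \<bar>y - x\<bar> < e"
  proof (intro allI impI)
    fix e :: real assume e: "e > 0"
    have o: "open ({k} \<times> ball x e)" by (intro open_Times open_discrete open_ball)
    have "(k,x) \<in> {k} \<times> ball x e" using e by simp
    hence "S \<inter> ({k} \<times> ball x e) \<noteq> {}" using h o unfolding closure_iff_nhds_not_empty by blast
    then obtain y where "(k,y) \<in> S" "y \<in> ball x e" by auto
    thus "\<exists>y. (k, y) \<in> S \<and> \<bar>y - x\<bar> < e" by (auto simp: dist_real_def)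
  qed
next
  assume h: "\<forall>e>0. \<exists>y. (k, y) \<in> S \<and> \<bar>y - x\<bar> < e"
  show "(k, x) \<in> closure S"
    unfolding closure_iff_nhds_not_empty
  proof (intro allI impI)
    fix A T assume T: "T \<subseteq> A" "open T" "(k,x) \<in> T"
    then obtain U V where UV: "open U" "open V" "(k,x) \<in> U \<times> V" "U \<times> V \<subseteq> T"
      using open_prod_def by metis
    then obtain e where e: "e > 0" "\<forall>y. dist y x < e \<longrightarrow> y \<in> V"
      using open_dist by (metis mem_Times_iff snd_conv)
    obtain y where y: "(k,y) \<in> S" "\<bar>y - x\<bar> < e" using h e(1) by blast
    have "(k,y) \<in> U \<times> V" using UV(3) e(2) y(2) by (auto simp: dist_real_def)
    thus "S \<inter> A \<noteq> {}" using y(1) UV(4) T(1) by blast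
  qed
qed

lemma box_inter: "box k a b \<inter> box k' a' b' = (if k = k' then box k (max a a') (min b b') else {})"
  by (auto simp: box_def)

lemma subdomain_Int:
  assumes "subdomain D J" "subdomain D K" "J \<inter> K \<noteq> {}"
  shows "subdomain D (J \<inter> K)"
proof -
  obtain B where B: "finite B" "\<forall>(k,a,b)\<in>B. a < b" "J = (\<Union>(k,a,b)\<in>B. box k a b)"
    using assms(1) unfolding subdomain_def by blast
  obtain B' where B': "finite B'" "\<forall>(k,a,b)\<in>B'. a < b" "K = (\<Union>(k,a,b)\<in>B'. box k a b)"
    using assms(2) unfolding subdomain_def by blast
  define B2 where "B2 = (\<lambda>((k,a,b),(k',a',b')). (k, max a a', min b b')) `
     {(u,v) \<in> B \<times> B'. fst u = fst v \<and> max (fst (snd u)) (fst (snd v)) < min (snd (snd u)) (snd (snd v))}"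
  have "finite B2" unfolding B2_def using B(1) B'(1) by (auto intro: finite_subset[of _ "B \<times> B'"])
  moreover have "\<forall>(k,a,b)\<in>B2. a < b" unfolding B2_def by auto
  moreover have "J \<inter> K = (\<Union>(k,a,b)\<in>B2. box k a b)"
  proof
    show "J \<inter> K \<subseteq> (\<Union>(k,a,b)\<in>B2. box k a b)"
    proof
      fix p assume p: "p \<in> J \<inter> K"
      then obtain k a b where kab: "(k,a,b) \<in> B" "p \<in> box k a b" using B(3) by auto
      obtain k' a' b' where kab': "(k',a',b') \<in> B'" "p \<in> box k' a' b'" using B'(3) p by auto
      have "k = k'" "max a a' < min b b'" "p \<in> box k (max a a') (min b b')"
        using kab(2) kab'(2) by (auto simp: box_def)
      hence "(k, max a a', min b b') \<in> B2" unfolding B2_def using kab(1) kab'(1)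
        by (auto intro!: image_eqI[where x="((k,a,b),(k',a',b'))"])
      thus "p \<in> (\<Union>(k,a,b)\<in>B2. box k a b)" using \<open>p \<in> box k (max a a') (min b b')\<close> by auto
    qed
  next
    show "(\<Union>(k,a,b)\<in>B2. box k a b) \<subseteq> J \<inter> K"
      unfolding B2_def B(3) B'(3) by (force simp: box_def)
  qed
  ultimately show ?thesis using assms unfolding subdomain_def by blast
qed

lemma subdomain_infinite:
  assumes "subdomain D J" shows "infinite J"
proof -
  obtain B where B: "finite B" "\<forall>(k,a,b)\<in>B. a < b" "J = (\<Union>(k,a,b)\<in>B. box k a b)" "J \<noteq> {}"
    using assms unfolding subdomain_def by blast
  then obtain k a b where "(k,a,b) \<in> B" by auto
  hence ab: "a < b" "box k a b \<subseteq> J" using B by auto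
  have "infinite {a..<b}" using ab(1) by (simp add: infinite_Ico)
  moreover have "inj_on (\<lambda>x. (k,x)) {a..<b}" by (simp add: inj_on_def)
  ultimately have "infinite ((\<lambda>x. (k,x)) ` {a..<b})" using finite_imageD by blast
  moreover have "(\<lambda>x. (k,x)) ` {a..<b} = box k a b" by (auto simp: box_def)
  ultimately show ?thesis using ab(2) finite_subset by metis
qed

lemma subdomain_box:
  assumes "subdomain D K"
  obtains k c d where "c < d" "box k c d \<subseteq> K"
proof -
  obtain B where B: "finite B" "\<forall>(k,a,b)\<in>B. a < b" "K = (\<Union>(k,a,b)\<in>B. box k a b)" "K \<noteq> {}"
    using assms unfolding subdomain_def by blast
  then obtain k a b where "(k,a,b) \<in> B" by auto
  thus ?thesis using B that[of a b k] by fastforce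
qed



definition pwt :: "(nat \<times> real) set \<Rightarrow> ((nat \<times> real) \<Rightarrow> (nat \<times> real)) \<Rightarrow> bool" where
  "pwt D f \<longleftrightarrow> (\<exists>P. finite P \<and> (\<forall>(k,a,b)\<in>P. a < b \<and> box k a b \<subseteq> D) \<and>
          D = (\<Union>(k,a,b)\<in>P. box k a b) \<and>
          (\<forall>(k,a,b)\<in>P. \<exists>k' c. \<forall>x\<in>{a..<b}. f (k, x) = (k', x + c)))"

lemma IET_iff: "f \<in> IET D \<longleftrightarrow> bij_betw f D D \<and> pwt D f"
  by (simp add: IET_def pwt_def)

lemma pwt_obtain:
  assumes "pwt D f"
  obtains P \<kappa> \<tau> where "finite P" "\<forall>(k,a,b)\<in>P. a < b \<and> box k a b \<subseteq> D"
    "D = (\<Union>(k,a,b)\<in>P. box k a b)"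
    "\<forall>(k,a,b)\<in>P. \<forall>x\<in>{a..<b}. f (k, x) = (\<kappa> (k,a,b), x + \<tau> (k,a,b))"
proof -
  obtain P where P: "finite P" "\<forall>(k,a,b)\<in>P. a < b \<and> box k a b \<subseteq> D"
    "D = (\<Union>(k,a,b)\<in>P. box k a b)"
    "\<forall>(k,a,b)\<in>P. \<exists>k' c. \<forall>x\<in>{a..<b}. f (k, x) = (k', x + c)"
    using assms unfolding pwt_def by blast
  have "\<forall>\<pi>\<in>P. \<exists>kc. \<forall>x\<in>{fst (snd \<pi>)..<snd (snd \<pi>)}. f (fst \<pi>, x) = (fst kc, x + snd kc)"
    using P(4) by fastforce
  then obtain F where F: "\<forall>\<pi>\<in>P. \<forall>x\<in>{fst (snd \<pi>)..<snd (snd \<pi>)}. f (fst \<pi>, x) = (fst (F \<pi>), x + snd (F \<pi>))"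
    by metis
  have "\<forall>(k,a,b)\<in>P. \<forall>x\<in>{a..<b}. f (k, x) = ((fst \<circ> F) (k,a,b), x + (snd \<circ> F) (k,a,b))"
    using F by fastforce
  thus ?thesis using that P by blast
qed



lemma pwt_image:
  assumes "bij_betw f D D" "pwt D f" "subdomain D J"
  shows "subdomain D (f ` J)"
proof -
  obtain P \<kappa> \<tau> where P: "finite P" "\<forall>(k,a,b)\<in>P. a < b \<and> box k a b \<subseteq> D"
    "D = (\<Union>(k,a,b)\<in>P. box k a b)"
    "\<forall>(k,a,b)\<in>P. \<forall>x\<in>{a..<b}. f (k, x) = (\<kappa> (k,a,b), x + \<tau> (k,a,b))"
    by (rule pwt_obtain[OF assms(2)])
  obtain B where B: "finite B" "\<forall>(k,a,b)\<in>B. a < b" "J = (\<Union>(k,a,b)\<in>B. box k a b)" "J \<subseteq> D" "J \<noteq> {}"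
    using assms(3) unfolding subdomain_def by blast
  define B2 where "B2 = (\<lambda>((k,a,b),(k1,a1,b1)). (\<kappa> (k1,a1,b1), max a a1 + \<tau> (k1,a1,b1), min b b1 + \<tau> (k1,a1,b1))) `
     {(u,v) \<in> B \<times> P. fst u = fst v \<and> max (fst (snd u)) (fst (snd v)) < min (snd (snd u)) (snd (snd v))}"
  have "finite B2" unfolding B2_def using B(1) P(1) by (auto intro: finite_subset[of _ "B \<times> P"])
  moreover have "\<forall>(k,a,b)\<in>B2. a < b" unfolding B2_def by auto
  moreover have "f ` J = (\<Union>(k,a,b)\<in>B2. box k a b)"
  proof
    show "f ` J \<subseteq> (\<Union>(k,a,b)\<in>B2. box k a b)"
    proof
      fix q assume "q \<in> f ` J"
      then obtain k x where kx: "(k,x) \<in> J" "q = f (k,x)" by auto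
      then obtain a b where ab: "(k,a,b) \<in> B" "(k,x) \<in> box k a b" using B(3) by (auto simp: box_def)
      obtain k1 a1 b1 where ab1: "(k1,a1,b1) \<in> P" "(k,x) \<in> box k1 a1 b1" using P(3) kx(1) B(4) by auto
      have k1: "k1 = k" and xr: "max a a1 \<le> x" "x < min b b1" using ab(2) ab1(2) by (auto simp: box_def)
      have fq: "q = (\<kappa> (k,a1,b1), x + \<tau> (k,a1,b1))" using P(4) ab1 kx(2) k1 xr by auto
      have "(\<kappa> (k,a1,b1), max a a1 + \<tau> (k,a1,b1), min b b1 + \<tau> (k,a1,b1)) \<in> B2"
        unfolding B2_def using ab(1) ab1(1) k1 xr
        by (auto intro!: image_eqI[where x="((k,a,b),(k,a1,b1))"])
      moreover have "q \<in> box (\<kappa> (k,a1,b1)) (max a a1 + \<tau> (k,a1,b1)) (min b b1 + \<tau> (k,a1,b1))"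
        using fq xr by (auto simp: box_def)
      ultimately show "q \<in> (\<Union>(k,a,b)\<in>B2. box k a b)" by blast
    qed
  next
    show "(\<Union>(k,a,b)\<in>B2. box k a b) \<subseteq> f ` J"
    proof
      fix q assume "q \<in> (\<Union>(k,a,b)\<in>B2. box k a b)"
      then obtain k a b a1 b1 where m: "(k,a,b) \<in> B" "(k,a1,b1) \<in> P"
        "q \<in> box (\<kappa> (k,a1,b1)) (max a a1 + \<tau> (k,a1,b1)) (min b b1 + \<tau> (k,a1,b1))"
        unfolding B2_def by auto
      then obtain y where y: "q = (\<kappa> (k,a1,b1), y)" "max a a1 + \<tau> (k,a1,b1) \<le> y" "y < min b b1 + \<tau> (k,a1,b1)"
        by (auto simp: box_def)
      define x where "x = y - \<tau> (k,a1,b1)"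
      have xr: "a1 \<le> x" "x < b1" "a \<le> x" "x < b" using y unfolding x_def by auto
      have "f (k,x) = q" using P(4) m(2) xr y unfolding x_def by auto
      moreover have "(k,x) \<in> box k a b" using xr by (simp add: box_def)
      hence "(k,x) \<in> J" using B(3) m(1) by blast
      ultimately show "q \<in> f ` J" by blast
    qed
  qed
  moreover have "f ` J \<subseteq> D" using B(4) assms(1) bij_betw_imp_surj_on by blast
  moreover have "f ` J \<noteq> {}" using B(5) by auto
  ultimately show ?thesis unfolding subdomain_def by blast
qed



lemma pwt_dense:
  assumes "pwt D f" "subdomain D J" "J \<subseteq> closure S"
  shows "f ` J \<subseteq> closure (f ` S)"
proof
  obtain P \<kappa> \<tau> where P: "finite P" "\<forall>(k,a,b)\<in>P. a < b \<and> box k a b \<subseteq> D"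
    "D = (\<Union>(k,a,b)\<in>P. box k a b)"
    "\<forall>(k,a,b)\<in>P. \<forall>x\<in>{a..<b}. f (k, x) = (\<kappa> (k,a,b), x + \<tau> (k,a,b))"
    by (rule pwt_obtain[OF assms(1)])
  obtain B where B: "finite B" "\<forall>(k,a,b)\<in>B. a < b" "J = (\<Union>(k,a,b)\<in>B. box k a b)" "J \<subseteq> D"
    using assms(2) unfolding subdomain_def by blast
  fix q assume "q \<in> f ` J"
  then obtain k t where kt: "(k,t) \<in> J" "q = f (k,t)" by auto
  then obtain c d where cd: "(k,c,d) \<in> B" "c \<le> t" "t < d" using B(3) by (auto simp: box_def)
  obtain a b where ab: "(k,a,b) \<in> P" "a \<le> t" "t < b" using P(3) kt(1) B(4) by (auto simp: box_def)
  define e where "e = min b d"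
  have q: "q = (\<kappa> (k,a,b), t + \<tau> (k,a,b))" using P(4) ab kt(2) by auto
  show "q \<in> closure (f ` S)"
    unfolding q closure_pt
  proof (intro allI impI)
    fix \<epsilon> :: real assume \<epsilon>: "\<epsilon> > 0"
    define \<delta> where "\<delta> = min (e - t) \<epsilon> / 2"
    have \<delta>: "\<delta> > 0" "t + 2 * \<delta> \<le> e" "2 * \<delta> \<le> \<epsilon>" using \<epsilon> cd ab unfolding \<delta>_def e_def by auto
    have "(k, t + \<delta>) \<in> box k c d" using cd \<delta> unfolding e_def by (auto simp: box_def)
    hence "(k, t + \<delta>) \<in> closure S" using B(3) cd(1) assms(3) by blast
    then obtain s where s: "(k, s) \<in> S" "\<bar>s - (t + \<delta>)\<bar> < \<delta>" using \<delta>(1) unfolding closure_pt by blast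
    have sr: "a \<le> s" "s < b" "\<bar>s - t\<bar> < \<epsilon>" using s \<delta> ab unfolding e_def by auto
    have "f (k,s) = (\<kappa> (k,a,b), s + \<tau> (k,a,b))" using P(4) ab(1) sr by auto
    hence "(\<kappa> (k,a,b), s + \<tau> (k,a,b)) \<in> f ` S" using s(1) by (metis image_eqI)
    thus "\<exists>y. (\<kappa> (k,a,b), y) \<in> f ` S \<and> \<bar>y - (t + \<tau> (k,a,b))\<bar> < \<epsilon>"
      using sr(3) by (intro exI[of _ "s + \<tau> (k,a,b)"]) auto
  qed
qed



lemma pwt_inv:
  assumes "bij_betw f D D" "pwt D f"
  shows "pwt D (inv_into D f)"
proof -
  obtain P \<kappa> \<tau> where P: "finite P" "\<forall>(k,a,b)\<in>P. a < b \<and> box k a b \<subseteq> D"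
    "D = (\<Union>(k,a,b)\<in>P. box k a b)"
    "\<forall>(k,a,b)\<in>P. \<forall>x\<in>{a..<b}. f (k, x) = (\<kappa> (k,a,b), x + \<tau> (k,a,b))"
    by (rule pwt_obtain[OF assms(2)])
  have inj: "inj_on f D" using assms(1) bij_betw_imp_inj_on by blast
  have img: "f ` box k a b = box (\<kappa> (k,a,b)) (a + \<tau> (k,a,b)) (b + \<tau> (k,a,b))" if "(k,a,b) \<in> P" for k a b
  proof
    show "f ` box k a b \<subseteq> box (\<kappa> (k,a,b)) (a + \<tau> (k,a,b)) (b + \<tau> (k,a,b))"
      using P(4) that by (auto simp: box_def)
    show "box (\<kappa> (k,a,b)) (a + \<tau> (k,a,b)) (b + \<tau> (k,a,b)) \<subseteq> f ` box k a b"
    proof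
      fix q assume "q \<in> box (\<kappa> (k,a,b)) (a + \<tau> (k,a,b)) (b + \<tau> (k,a,b))"
      then obtain y where y: "q = (\<kappa> (k,a,b), y)" "a \<le> y - \<tau> (k,a,b)" "y - \<tau> (k,a,b) < b"
        by (auto simp: box_def)
      have "f (k, y - \<tau> (k,a,b)) = q" using P(4) that y by auto
      moreover have "(k, y - \<tau> (k,a,b)) \<in> box k a b" using y by (auto simp: box_def)
      ultimately show "q \<in> f ` box k a b" by blast
    qed
  qed
  define P' where "P' = (\<lambda>(k,a,b). (\<kappa> (k,a,b), a + \<tau> (k,a,b), b + \<tau> (k,a,b))) ` P"
  have fD: "f ` D = D" using assms(1) bij_betw_imp_surj_on by blast
  have "finite P'" unfolding P'_def using P(1) by simp
  moreover have "\<forall>(k,a,b)\<in>P'. a < b \<and> box k a b \<subseteq> D"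
  proof
    fix \<pi> assume "\<pi> \<in> P'"
    then obtain k a b where kab: "(k,a,b) \<in> P" "\<pi> = (\<kappa> (k,a,b), a + \<tau> (k,a,b), b + \<tau> (k,a,b))"
      unfolding P'_def by auto
    have "box k a b \<subseteq> D" using P(2) kab(1) by auto
    hence "f ` box k a b \<subseteq> D" using fD by blast
    thus "case \<pi> of (k,a,b) \<Rightarrow> a < b \<and> box k a b \<subseteq> D" using kab img[OF kab(1)] P(2) by auto
  qed
  moreover have "D = (\<Union>(k,a,b)\<in>P'. box k a b)"
  proof -
    have "D = f ` (\<Union>(k,a,b)\<in>P. box k a b)" using fD P(3) by simp
    also have "\<dots> = (\<Union>\<pi>\<in>P. f ` (case \<pi> of (k,a,b) \<Rightarrow> box k a b))" by (simp add: image_UN)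
    also have "\<dots> = (\<Union>\<pi>\<in>P. (\<lambda>(k,a,b). box (\<kappa> (k,a,b)) (a + \<tau> (k,a,b)) (b + \<tau> (k,a,b))) \<pi>)"
    proof (intro SUP_cong refl)
      fix \<pi> assume "\<pi> \<in> P"
      then obtain k a b where "\<pi> = (k,a,b)" "(k,a,b) \<in> P" by (cases \<pi>) auto
      thus "f ` (case \<pi> of (k,a,b) \<Rightarrow> box k a b) = (\<lambda>(k,a,b). box (\<kappa> (k,a,b)) (a + \<tau> (k,a,b)) (b + \<tau> (k,a,b))) \<pi>"
        using img by simp
    qed
    also have "\<dots> = (\<Union>(k,a,b)\<in>P'. box k a b)" by (auto simp: P'_def)
    finally show ?thesis .
  qed
  moreover have "\<forall>(k,a,b)\<in>P'. \<exists>k' c. \<forall>x\<in>{a..<b}. inv_into D f (k, x) = (k', x + c)"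
  proof
    fix \<pi> assume "\<pi> \<in> P'"
    then obtain k a b where kab: "(k,a,b) \<in> P" "\<pi> = (\<kappa> (k,a,b), a + \<tau> (k,a,b), b + \<tau> (k,a,b))"
      unfolding P'_def by auto
    have "\<forall>x\<in>{a + \<tau> (k,a,b)..<b + \<tau> (k,a,b)}. inv_into D f (\<kappa> (k,a,b), x) = (k, x + - \<tau> (k,a,b))"
    proof
      fix x assume x: "x \<in> {a + \<tau> (k,a,b)..<b + \<tau> (k,a,b)}"
      have "(k, x - \<tau> (k,a,b)) \<in> box k a b" using x by (auto simp: box_def)
      hence "(k, x - \<tau> (k,a,b)) \<in> D" using P(2) kab(1) by auto
      moreover have "f (k, x - \<tau> (k,a,b)) = (\<kappa> (k,a,b), x)" using P(4) kab(1) x by auto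
      ultimately show "inv_into D f (\<kappa> (k,a,b), x) = (k, x + - \<tau> (k,a,b))"
        using inv_into_f_eq[OF inj] by simp
    qed
    thus "case \<pi> of (k,a,b) \<Rightarrow> \<exists>k' c. \<forall>x\<in>{a..<b}. inv_into D f (k, x) = (k', x + c)"
      using kab(2) by auto
  qed
  ultimately show ?thesis unfolding pwt_def by blast
qed






definition good :: "(nat \<times> real) set \<Rightarrow> ((nat \<times> real) \<Rightarrow> (nat \<times> real)) \<Rightarrow> bool" where
  "good D f \<longleftrightarrow> bij_betw f D D \<and> (\<forall>J. subdomain D J \<longrightarrow> subdomain D (f ` J)) \<and>
     (\<forall>J S. subdomain D J \<longrightarrow> J \<subseteq> closure S \<longrightarrow> f ` J \<subseteq> closure (f ` S))"

lemma good_of_pwt: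
  assumes "bij_betw f D D" "pwt D f" shows "good D f"
  unfolding good_def
proof (intro conjI allI impI)
  show "bij_betw f D D" by (rule assms(1))
  fix J assume "subdomain D J"
  thus "subdomain D (f ` J)" by (rule pwt_image[OF assms])
next
  fix J S assume "subdomain D J" "J \<subseteq> closure S"
  thus "f ` J \<subseteq> closure (f ` S)" by (rule pwt_dense[OF assms(2)])
qed

lemma good_IET: "f \<in> IET D \<Longrightarrow> good D f"
  unfolding IET_iff using good_of_pwt by blast

lemma good_inv: assumes "f \<in> IET D" shows "good D (inv_into D f)"
proof -
  have b: "bij_betw f D D" and p: "pwt D f" using assms IET_iff by auto
  show ?thesis by (rule good_of_pwt[OF bij_betw_inv_into[OF b] pwt_inv[OF b p]])
qed

lemma good_bij: "good D f \<Longrightarrow> bij_betw f D D" by (simp add: good_def)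
lemma good_sd: "good D f \<Longrightarrow> subdomain D J \<Longrightarrow> subdomain D (f ` J)" by (simp add: good_def)
lemma good_dense: "good D f \<Longrightarrow> subdomain D J \<Longrightarrow> J \<subseteq> closure S \<Longrightarrow> f ` J \<subseteq> closure (f ` S)"
  by (simp add: good_def)

lemma good_comp: assumes "good D f" "good D h" shows "good D (f \<circ> h)"
  unfolding good_def
proof (intro conjI allI impI)
  have e: "\<And>X. (f \<circ> h) ` X = f ` (h ` X)" by (simp add: image_comp)
  show "bij_betw (f \<circ> h) D D" by (rule bij_betw_trans[OF good_bij[OF assms(2)] good_bij[OF assms(1)]])
  fix J assume J: "subdomain D J"
  show "subdomain D ((f \<circ> h) ` J)" unfolding e by (rule good_sd[OF assms(1) good_sd[OF assms(2) J]])
next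
  have e: "\<And>X. (f \<circ> h) ` X = f ` (h ` X)" by (simp add: image_comp)
  fix J S assume J: "subdomain D J" "J \<subseteq> closure S"
  show "(f \<circ> h) ` J \<subseteq> closure ((f \<circ> h) ` S)" unfolding e
    by (rule good_dense[OF assms(1) good_sd[OF assms(2) J(1)] good_dense[OF assms(2) J]])
qed

lemma iter_conj:
  assumes "\<forall>q\<in>D. F (\<phi> q) = \<phi> (G q)" "\<forall>q\<in>D. G q \<in> D" "q \<in> D"
  shows "(F ^^ n) (\<phi> q) = \<phi> ((G ^^ n) q) \<and> (G ^^ n) q \<in> D"
  using assms by (induction n) auto

lemma inv_conj:
  assumes "bij_betw \<phi> D D" "bij_betw F D D" "bij_betw G D D" "\<forall>q\<in>D. F (\<phi> q) = \<phi> (G q)" "q \<in> D"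
  shows "inv_into D F (\<phi> q) = \<phi> (inv_into D G q)"
proof -
  have qG: "q \<in> G ` D" using assms(3,5) bij_betw_imp_surj_on by blast
  define r where "r = inv_into D G q"
  have r: "r \<in> D" "G r = q" unfolding r_def using qG by (auto intro: inv_into_into f_inv_into_f)
  have "F (\<phi> r) = \<phi> q" using assms(4) r by auto
  moreover have "\<phi> r \<in> D" using r(1) assms(1) bij_betwE by blast
  ultimately show ?thesis unfolding r_def[symmetric]
    using inv_into_f_eq[OF bij_betw_imp_inj_on[OF assms(2)]] by blast
qed

lemma ipow_conj:
  assumes "bij_betw \<phi> D D" "bij_betw F D D" "bij_betw G D D" "\<forall>q\<in>D. F (\<phi> q) = \<phi> (G q)" "q \<in> D"
  shows "ipow D F m (\<phi> q) = \<phi> (ipow D G m q)"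
proof (cases "0 \<le> m")
  case True
  have "\<forall>q\<in>D. G q \<in> D" using assms(3) bij_betwE by blast
  hence "(F ^^ n) (\<phi> q) = \<phi> ((G ^^ n) q)" for n using iter_conj[of D F \<phi> G q n] assms(4,5) by blast
  thus ?thesis using True unfolding ipow_def by simp
next
  case False
  have c: "\<forall>q\<in>D. inv_into D F (\<phi> q) = \<phi> (inv_into D G q)" using inv_conj[OF assms(1-4)] by blast
  have "\<forall>q\<in>D. inv_into D G q \<in> D" using bij_betw_inv_into[OF assms(3)] bij_betwE by blast
  hence "(inv_into D F ^^ n) (\<phi> q) = \<phi> ((inv_into D G ^^ n) q)" for n
    using iter_conj[of D "inv_into D F" \<phi> "inv_into D G" q n] c assms(5) by blast
  thus ?thesis using False unfolding ipow_def by simp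
qed

lemma orbit_conj:
  assumes "bij_betw \<phi> D D" "bij_betw F D D" "bij_betw G D D" "\<forall>q\<in>D. F (\<phi> q) = \<phi> (G q)" "q \<in> D"
  shows "cyc_orbit D F (\<phi> q) = \<phi> ` cyc_orbit D G q"
  unfolding cyc_orbit_def using ipow_conj[OF assms] by auto

lemma orbit_sub:
  assumes "bij_betw h D D" "S \<subseteq> D" "h ` S = S" "p \<in> S"
  shows "cyc_orbit D h p \<subseteq> S"
proof -
  have inj: "inj_on h D" using assms(1) bij_betw_imp_inj_on by blast
  have i1: "\<forall>q\<in>S. h q \<in> S" using assms(3) by blast
  have i2: "\<forall>q\<in>S. inv_into D h q \<in> S"
  proof
    fix q assume "q \<in> S"
    then obtain s where "s \<in> S" "q = h s" using assms(3) by blast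
    moreover have "s \<in> D" using \<open>s \<in> S\<close> assms(2) by blast
    ultimately show "inv_into D h q \<in> S" using inv_into_f_f[OF inj, of s] by simp
  qed
  have "(h ^^ n) p \<in> S" for n using assms(4) i1 by (induction n) auto
  moreover have "(inv_into D h ^^ n) p \<in> S" for n using assms(4) i2 by (induction n) auto
  ultimately show ?thesis unfolding cyc_orbit_def ipow_def by auto
qed

lemma irrD: "irreducible_on D h J \<Longrightarrow> p \<in> J \<Longrightarrow> J \<subseteq> closure (cyc_orbit D h p)"
  by (simp add: irreducible_on_def)

lemma irred_sub:
  assumes "bij_betw h D D" "J \<subseteq> D" "h ` J = J" "irreducible_on D h J"
    "subdomain D K" "K \<subseteq> J" "h ` K = K"
  shows "K = J"
proof (rule ccontr)
  assume "K \<noteq> J"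
  then obtain p where p: "p \<in> J - K" using assms(6) by blast
  have inj: "inj_on h D" using assms(1) bij_betw_imp_inj_on by blast
  have "h ` (J - K) = J - K" using inj_on_image_set_diff[OF inj, of J K] assms(2,3,6,7) by auto
  hence orb: "cyc_orbit D h p \<subseteq> J - K" using orbit_sub[OF assms(1), of "J - K" p] assms(2) p by blast
  obtain k c d where cd: "c < d" "box k c d \<subseteq> K" using subdomain_box[OF assms(5)] by blast
  have "(k, (c+d)/2) \<in> box k c d" using cd(1) by (simp add: box_def)
  hence "(k, (c+d)/2) \<in> J" using cd(2) assms(6) by blast
  moreover have "J \<subseteq> closure (cyc_orbit D h p)" using irrD[OF assms(4)] p by blast
  ultimately have "(k, (c+d)/2) \<in> closure (cyc_orbit D h p)" by (rule subsetD[rotated])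
  then obtain y where y: "(k, y) \<in> cyc_orbit D h p" "\<bar>y - (c+d)/2\<bar> < (d - c)/2"
    unfolding closure_pt using cd(1) by (meson half_gt_zero diff_gt_0_iff_gt)
  have hh: "y - (c+d)/2 < (d-c)/2 \<and> -(y - (c+d)/2) < (d-c)/2" using y(2) abs_less_iff by blast
  have "c < y" using conjunct2[OF hh] by (simp add: field_simps)
  hence "c \<le> y" by simp
  have "y < d" using conjunct1[OF hh] by (simp add: field_simps)
  hence "(k, y) \<in> box k c d" using \<open>c \<le> y\<close> by (simp add: box_def)
  thus False using y(1) orb cd(2) by blast
qed

lemma funpow_mult_fix:
  assumes "(h ^^ M) p = p" shows "(h ^^ (M * j)) p = p"
proof (induction j)
  case (Suc j)
  have "M * Suc j = M * j + M" by simp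
  hence "(h ^^ (M * Suc j)) p = (h ^^ (M * j)) ((h ^^ M) p)"
    by (metis funpow_add o_apply)
  thus ?case using Suc assms by simp
qed simp

lemma inv_funpow:
  assumes "bij_betw h D D" "q \<in> D" "n \<le> k"
  shows "(inv_into D h ^^ n) ((h ^^ k) q) = (h ^^ (k - n)) q"
  using assms(3)
proof (induction n)
  case (Suc n)
  have inD: "(h ^^ (k - Suc n)) q \<in> D" using bij_betw_funpow[OF assms(1)] assms(2) bij_betwE by blast
  have "(h ^^ (k - n)) q = h ((h ^^ (k - Suc n)) q)" using Suc.prems
    by (metis Suc_diff_le diff_Suc_Suc diff_diff_cancel diff_le_self funpow.simps(2) o_apply)
  hence "(inv_into D h ^^ Suc n) ((h ^^ k) q) = inv_into D h (h ((h ^^ (k - Suc n)) q))"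
    using Suc by simp
  also have "\<dots> = (h ^^ (k - Suc n)) q"
    using inv_into_f_f[OF bij_betw_imp_inj_on[OF assms(1)] inD] .
  finally show ?case .
qed simp

lemma orbit_finite:
  assumes "bij_betw h D D" "M \<ge> 1" "p \<in> D" "(h ^^ M) p = p"
  shows "finite (cyc_orbit D h p)"
proof -
  have fw: "(h ^^ n) p \<in> (\<lambda>r. (h ^^ r) p) ` {..<M}" for n
  proof -
    have "n = n mod M + M * (n div M)" by simp
    hence "(h ^^ n) p = (h ^^ (n mod M)) ((h ^^ (M * (n div M))) p)"
      by (metis funpow_add o_apply)
    also have "\<dots> = (h ^^ (n mod M)) p" using funpow_mult_fix[OF assms(4)] by simp
    finally show ?thesis using assms(2) by auto
  qed
  have bw: "(inv_into D h ^^ n) p \<in> (\<lambda>r. (h ^^ r) p) ` {..<M}" for n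
  proof -
    have "(inv_into D h ^^ n) p = (inv_into D h ^^ n) ((h ^^ (M * n)) p)"
      using funpow_mult_fix[OF assms(4)] by simp
    also have "\<dots> = (h ^^ (M * n - n)) p"
      using inv_funpow[OF assms(1,3)] assms(2) by simp
    finally show ?thesis using fw by simp
  qed
  have "cyc_orbit D h p \<subseteq> (\<lambda>r. (h ^^ r) p) ` {..<M}"
    unfolding cyc_orbit_def ipow_def using fw bw by auto
  thus ?thesis using finite_subset by blast
qed




lemma sd_sub: "subdomain D J \<Longrightarrow> J \<subseteq> D" by (simp add: subdomain_def)
lemma sd_ne: "subdomain D J \<Longrightarrow> J \<noteq> {}" by (simp add: subdomain_def)
lemma image_pow_inv:
  assumes "a ` X = X" shows "(a ^^ n) ` X = X"
proof (induction n)
  case (Suc n)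
  have "(a ^^ Suc n) ` X = a ` ((a ^^ n) ` X)" by (simp add: image_comp)
  thus ?case using Suc assms by simp
qed simp

lemma perm_comp:
  assumes gf: "good D f" and bh: "bij_betw h D D" and comm: "\<forall>p\<in>D. f (h p) = h (f p)"
    and fin: "finite CH"
    and comps: "\<forall>K\<in>CH. subdomain D K \<and> h ` K = K \<and> irreducible_on D h K"
    and M: "M \<ge> 1" "\<forall>p\<in>D - \<Union>CH. (h ^^ M) p = p"
    and J: "J \<in> CH"
  shows "\<exists>n\<ge>1. (f ^^ n) ` J = J"
proof -
  have bf: "bij_betw f D D" using good_bij[OF gf] .
  have injh: "inj_on h D" using bh bij_betw_imp_inj_on by blast
  have sub: "K \<subseteq> D" if "K \<in> CH" for K using comps that sd_sub by blast
  have step: "f ` K \<in> CH" if K: "K \<in> CH" for K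
  proof -
    have KD: "K \<subseteq> D" using sub K .
    have FKD: "f ` K \<subseteq> D" using KD bf bij_betwE by blast
    have sFK: "subdomain D (f ` K)" using good_sd[OF gf] comps K by blast
    have hK: "h ` K = K" using comps K by blast
    have hFK: "h ` f ` K = f ` K"
    proof -
      have "h ` f ` K = (\<lambda>p. h (f p)) ` K" by (rule image_image)
      also have "\<dots> = (\<lambda>p. f (h p)) ` K"
      proof (rule image_cong[OF refl])
        fix p assume "p \<in> K" thus "h (f p) = f (h p)" using comm KD by auto
      qed
      also have "\<dots> = f ` h ` K" by (rule image_image[symmetric])
      finally show ?thesis using hK by simp
    qed
    have iFK: "irreducible_on D h (f ` K)"
      unfolding irreducible_on_def
    proof
      fix p assume "p \<in> f ` K"
      then obtain q where q: "q \<in> K" "p = f q" by blast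
      have qD: "q \<in> D" using q KD by blast
      have comm': "\<forall>q\<in>D. h (f q) = f (h q)"
      proof
        fix q assume "q \<in> D"
        hence "f (h q) = h (f q)" using comm by blast
        thus "h (f q) = f (h q)" by (rule sym)
      qed
      have oc: "cyc_orbit D h (f q) = f ` cyc_orbit D h q"
        by (rule orbit_conj[OF bf bh bh comm' qD])
      have iK: "irreducible_on D h K" using comps K by blast
      have c1: "K \<subseteq> closure (cyc_orbit D h q)" by (rule irrD[OF iK q(1)])
      have sK: "subdomain D K" using comps K by blast
      have "f ` K \<subseteq> closure (f ` cyc_orbit D h q)"
        by (rule good_dense[OF gf sK c1])
      thus "f ` K \<subseteq> closure (cyc_orbit D h p)" using oc q(2) by simp
    qed
    have "f ` K \<inter> \<Union>CH \<noteq> {}"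
    proof
      assume dis: "f ` K \<inter> \<Union>CH = {}"
      obtain p where p: "p \<in> f ` K" using sd_ne[OF sFK] by blast
      have pD: "p \<in> D" using p FKD by blast
      have orbsub: "cyc_orbit D h p \<subseteq> f ` K" using orbit_sub[OF bh FKD hFK p] .
      have "(h ^^ M) p = p" using M(2) pD p dis by blast
      hence "finite (cyc_orbit D h p)" using orbit_finite[OF bh M(1) pD] by blast
      hence "closure (cyc_orbit D h p) = cyc_orbit D h p" using finite_imp_closed closure_closed by blast
      moreover have "f ` K \<subseteq> closure (cyc_orbit D h p)" using irrD[OF iFK p] .
      ultimately have "f ` K \<subseteq> cyc_orbit D h p" by simp
      hence "finite (f ` K)" using \<open>finite (cyc_orbit D h p)\<close> finite_subset by blast
      thus False using subdomain_infinite[OF sFK] by blast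
    qed
    then obtain K' where K': "K' \<in> CH" "f ` K \<inter> K' \<noteq> {}" by blast
    have K'D: "K' \<subseteq> D" using sub K'(1) .
    have sI: "subdomain D (f ` K \<inter> K')" using subdomain_Int[OF sFK _ K'(2)] comps K'(1) by blast
    have hI: "h ` (f ` K \<inter> K') = f ` K \<inter> K'"
      using inj_on_image_Int[OF injh FKD K'D] hFK comps K'(1) by simp
    have e1: "f ` K \<inter> K' = K'"
      using irred_sub[OF bh K'D _ _ sI _ hI] comps K'(1) by blast
    have e2: "f ` K \<inter> K' = f ` K"
      using irred_sub[OF bh FKD hFK iFK sI _ hI] by blast
    show ?thesis using e1 e2 K'(1) by simp
  qed
  define T where "T i = (f ^^ i) ` J" for i
  have TC: "T i \<in> CH" for i
  proof (induction i)
    case 0 thus ?case using J by (simp add: T_def)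
  next
    case (Suc i)
    have "T (Suc i) = f ` T i" by (simp add: T_def image_comp)
    thus ?case using step Suc by simp
  qed
  have "\<not> inj_on T {..card CH}"
  proof
    assume "inj_on T {..card CH}"
    hence "card (T ` {..card CH}) = Suc (card CH)" by (simp add: card_image)
    moreover have "card (T ` {..card CH}) \<le> card CH" using TC fin by (intro card_mono) auto
    ultimately show False by simp
  qed
  then obtain i j where ij: "i \<noteq> j" "T i = T j" unfolding inj_on_def by blast
  have "\<exists>i j. i < j \<and> T i = T j"
  proof (cases "i < j")
    case True thus ?thesis using ij by blast
  next
    case False thus ?thesis using ij by (intro exI[of _ j] exI[of _ i]) auto
  qed
  then obtain i j where ij: "i < j" "T i = T j" by blast
  have JD: "J \<subseteq> D" using sub J .
  have bfi: "bij_betw (f ^^ i) D D" "bij_betw (f ^^ (j - i)) D D" using bij_betw_funpow[OF bf] by auto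
  have "(f ^^ j) ` J = (f ^^ i) ` ((f ^^ (j - i)) ` J)"
  proof -
    have "f ^^ j = f ^^ (i + (j - i))" using ij by simp
    also have "\<dots> = f ^^ i \<circ> f ^^ (j - i)" by (rule funpow_add)
    finally have "f ^^ j = f ^^ i \<circ> f ^^ (j - i)" .
    thus ?thesis by (simp add: image_comp)
  qed
  hence "(f ^^ i) ` ((f ^^ (j - i)) ` J) = (f ^^ i) ` J" using ij(2) unfolding T_def by simp
  moreover have "(f ^^ (j - i)) ` J \<subseteq> D" using bfi(2) JD bij_betwE by blast
  ultimately have "(f ^^ (j - i)) ` J = J"
    using inj_on_image_eq_iff[OF bij_betw_imp_inj_on[OF bfi(1)] _ JD] by blast
  thus ?thesis using ij(1) by (intro exI[of _ "j - i"]) auto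
qed




theorem mainTheorem11:
  fixes D :: "(nat \<times> real) set"
    and a g :: "(nat \<times> real) \<Rightarrow> (nat \<times> real)"
    and C :: "(nat \<times> real) set set"
  assumes "is_domain D"
    and "a \<in> IET D" and "g \<in> IET D"
    and "stable_elem D a"
    and "irreducible_components D a C"
    and "\<forall>p\<in>D. (g \<circ> a \<circ> inv_into D g) (a p) = a ((g \<circ> a \<circ> inv_into D g) p)"
  shows "\<forall>I\<in>C. g ` I \<inter> \<Union>C = {} \<or> (\<exists>J\<in>C. g ` I = J)"
proof
  define ig where "ig = inv_into D g"
  define b where "b = g \<circ> a \<circ> ig"
  have gg: "good D g" using good_IET assms(3) .
  have ga: "good D a" using good_IET assms(2) .
  have gig: "good D ig" unfolding ig_def using good_inv assms(3) .
  have gb: "good D b" unfolding b_def using good_comp[OF good_comp[OF gg ga] gig] .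
  have bg: "bij_betw g D D" using good_bij[OF gg] .
  have ba: "bij_betw a D D" using good_bij[OF ga] .
  have bb: "bij_betw b D D" using good_bij[OF gb] .
  have big: "bij_betw ig D D" using good_bij[OF gig] .
  have injg: "inj_on g D" using bg bij_betw_imp_inj_on by blast
  have inja: "inj_on a D" using ba bij_betw_imp_inj_on by blast
  have igg: "ig (g q) = q" if "q \<in> D" for q unfolding ig_def using inv_into_f_f[OF injg that] .
  have gig': "g (ig p) = p" if "p \<in> D" for p
  proof -
    have "p \<in> g ` D" using bg that bij_betw_imp_surj_on by blast
    thus ?thesis unfolding ig_def by (rule f_inv_into_f)
  qed
  have comm: "\<forall>p\<in>D. a (b p) = b (a p)"
  proof
    fix p assume "p \<in> D"
    hence "b (a p) = a (b p)" using assms(6) unfolding b_def ig_def by blast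
    thus "a (b p) = b (a p)" by (rule sym)
  qed
  have conj: "\<forall>q\<in>D. b (g q) = g (a q)"
  proof
    fix q assume "q \<in> D" thus "b (g q) = g (a q)" unfolding b_def using igg by simp
  qed
  have finC: "finite C" and compsC: "\<forall>J\<in>C. subdomain D J \<and> cyc_invariant a J \<and> irreducible_on D a J"
    and MC: "\<exists>m::nat. m \<ge> 1 \<and> (\<forall>p \<in> D - \<Union>C. (a ^^ m) p = p)"
    using assms(5) unfolding irreducible_components_def by auto
  obtain M where M: "M \<ge> 1" "\<forall>p \<in> D - \<Union>C. (a ^^ M) p = p" using MC by blast
  have compsA: "\<forall>J\<in>C. subdomain D J \<and> a ` J = J \<and> irreducible_on D a J"
    using compsC unfolding cyc_invariant_def by blast
  have subC: "J \<subseteq> D" if "J \<in> C" for J using compsA that sd_sub by blast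
  have stab: "a ` K = K" if "subdomain D K" "(a ^^ m) ` K = K" "m \<ge> 1" for K m
  proof -
    have "cyc_invariant (a ^^ m) K" using that(2) unfolding cyc_invariant_def .
    hence "cyc_invariant a K" using assms(4) that(1,3) unfolding stable_elem_def by blast
    thus ?thesis unfolding cyc_invariant_def .
  qed
  have powb: "(b ^^ n) (g q) = g ((a ^^ n) q)" if "q \<in> D" for n q
  proof -
    have "\<forall>q\<in>D. a q \<in> D" using ba bij_betwE by blast
    thus ?thesis using iter_conj[of D b g a q n] conj that by blast
  qed
  have gimg: "b ` g ` I = g ` I" if "I \<in> C" for I
  proof -
    have "b ` g ` I = (\<lambda>q. b (g q)) ` I" by (rule image_image)
    also have "\<dots> = (\<lambda>q. g (a q)) ` I"
    proof (rule image_cong[OF refl])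
      fix q assume "q \<in> I" thus "b (g q) = g (a q)" using conj subC[OF that] by blast
    qed
    also have "\<dots> = g ` a ` I" by (rule image_image[symmetric])
    also have "a ` I = I" using compsA that by blast
    finally show ?thesis .
  qed
  have girr: "irreducible_on D b (g ` I)" if "I \<in> C" for I
    unfolding irreducible_on_def
  proof
    fix p assume "p \<in> g ` I"
    then obtain q where q: "q \<in> I" "p = g q" by blast
    have qD: "q \<in> D" using q subC[OF that] by blast
    have oc: "cyc_orbit D b (g q) = g ` cyc_orbit D a q"
      by (rule orbit_conj[OF bg bb ba conj qD])
    have iI: "irreducible_on D a I" using compsA that by blast
    have c1: "I \<subseteq> closure (cyc_orbit D a q)" by (rule irrD[OF iI q(1)])
    have sI: "subdomain D I" using compsA that by blast
    have "g ` I \<subseteq> closure (g ` cyc_orbit D a q)" by (rule good_dense[OF gg sI c1])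
    thus "g ` I \<subseteq> closure (cyc_orbit D b p)" using oc q(2) by simp
  qed
  have compsB: "\<forall>K\<in>(\<lambda>I. g ` I) ` C. subdomain D K \<and> b ` K = K \<and> irreducible_on D b K"
  proof
    fix K assume "K \<in> (\<lambda>I. g ` I) ` C"
    then obtain I where I: "I \<in> C" "K = g ` I" by blast
    have "subdomain D I" using compsA I(1) by blast
    hence "subdomain D (g ` I)" by (rule good_sd[OF gg])
    moreover have "b ` (g ` I) = g ` I" by (rule gimg[OF I(1)])
    moreover have "irreducible_on D b (g ` I)" by (rule girr[OF I(1)])
    ultimately show "subdomain D K \<and> b ` K = K \<and> irreducible_on D b K" using I(2) by blast
  qed
  have MB: "\<forall>p\<in>D - \<Union>((\<lambda>I. g ` I) ` C). (b ^^ M) p = p"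
  proof
    fix p assume p: "p \<in> D - \<Union>((\<lambda>I. g ` I) ` C)"
    have pD: "p \<in> D" using p by simp
    define q where "q = ig p"
    have qD: "q \<in> D" unfolding q_def using bij_betwE[OF big] pD by blast
    have gq: "g q = p" unfolding q_def by (rule gig'[OF pD])
    have qn: "q \<notin> \<Union>C"
    proof
      assume "q \<in> \<Union>C"
      then obtain I where I: "I \<in> C" "q \<in> I" by blast
      have "g q \<in> g ` I" using I(2) by (rule imageI)
      hence "p \<in> \<Union>((\<lambda>I. g ` I) ` C)" using gq I(1) by auto
      thus False using p by simp
    qed
    have "q \<in> D - \<Union>C" using qD qn by simp
    hence aq: "(a ^^ M) q = q" using M(2) by blast
    have "(b ^^ M) p = (b ^^ M) (g q)" using gq by simp
    also have "\<dots> = g ((a ^^ M) q)" by (rule powb[OF qD])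
    also have "\<dots> = p" using aq gq by simp
    finally show "(b ^^ M) p = p" .
  qed
  fix I assume I: "I \<in> C"
  show "g ` I \<inter> \<Union>C = {} \<or> (\<exists>J\<in>C. g ` I = J)"
  proof (cases "g ` I \<inter> \<Union>C = {}")
    case True thus ?thesis by blast
  next
    case False
    then obtain Ij where Ij: "Ij \<in> C" "g ` I \<inter> Ij \<noteq> {}" by blast
    have IjD: "Ij \<subseteq> D" using subC[OF Ij(1)] .
    have ID: "I \<subseteq> D" using subC[OF I] .
    have gID: "g ` I \<subseteq> D" using ID bg bij_betwE by blast
    have sgI: "subdomain D (g ` I)" using compsB I by blast
    have sIj: "subdomain D Ij" using compsA Ij(1) by blast
    have aIj: "a ` Ij = Ij" using compsA Ij(1) by blast
    have comm2: "\<forall>p\<in>D. b (a p) = a (b p)"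
    proof
      fix p assume "p \<in> D" hence "a (b p) = b (a p)" using comm by blast
      thus "b (a p) = a (b p)" by (rule sym)
    qed
    obtain n where n: "n \<ge> 1" "(a ^^ n) ` (g ` I) = g ` I"
      using perm_comp[OF ga bb comm finite_imageI[OF finC, of "\<lambda>I. g ` I"] compsB M(1) MB imageI[OF I, of "\<lambda>I. g ` I"]] by blast
    define K where "K = g ` I \<inter> Ij"
    have sK: "subdomain D K" unfolding K_def using subdomain_Int[OF sgI sIj Ij(2)] .
    have injan: "inj_on (a ^^ n) D" using bij_betw_funpow[OF ba] bij_betw_imp_inj_on by blast
    have "(a ^^ n) ` K = (a ^^ n) ` (g ` I) \<inter> (a ^^ n) ` Ij"
      unfolding K_def by (rule inj_on_image_Int[OF injan gID IjD])
    hence "(a ^^ n) ` K = K" using n(2) image_pow_inv[OF aIj] unfolding K_def by simp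
    hence aK: "a ` K = K" using stab[OF sK _ n(1)] by blast
    have iIj: "irreducible_on D a Ij" using compsA Ij(1) by blast
    have "K \<subseteq> Ij" unfolding K_def by blast
    hence "K = Ij" using irred_sub[OF ba IjD aIj iIj sK _ aK] by blast
    hence IjsubgI: "Ij \<subseteq> g ` I" unfolding K_def by blast
    have compsA': "\<forall>K\<in>C. subdomain D K \<and> a ` K = K \<and> irreducible_on D a K" using compsA .
    obtain n' where n': "n' \<ge> 1" "(b ^^ n') ` Ij = Ij"
      using perm_comp[OF gb ba comm2 finC compsA' M(1) M(2) Ij(1)] by blast
    have sigIj: "subdomain D (ig ` Ij)" by (rule good_sd[OF gig sIj])
    have "(a ^^ n') ` (ig ` Ij) = ig ` ((b ^^ n') ` Ij)"
    proof -
      have "(a ^^ n') ` (ig ` Ij) = (\<lambda>p. (a ^^ n') (ig p)) ` Ij" by (rule image_image)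
      also have "\<dots> = (\<lambda>p. ig ((b ^^ n') p)) ` Ij"
      proof (rule image_cong[OF refl])
        fix p assume p: "p \<in> Ij"
        have pD: "p \<in> D" using p IjD by blast
        have igD: "ig p \<in> D" using pD big bij_betwE by blast
        have anD: "(a ^^ n') (ig p) \<in> D" using igD bij_betw_funpow[OF ba] bij_betwE by blast
        have "(b ^^ n') p = (b ^^ n') (g (ig p))" using gig'[OF pD] by simp
        also have "\<dots> = g ((a ^^ n') (ig p))" by (rule powb[OF igD])
        finally have "ig ((b ^^ n') p) = ig (g ((a ^^ n') (ig p)))" by simp
        also have "\<dots> = (a ^^ n') (ig p)" by (rule igg[OF anD])
        finally show "(a ^^ n') (ig p) = ig ((b ^^ n') p)" by (rule sym)
      qed
      also have "\<dots> = ig ` ((b ^^ n') ` Ij)" by (rule image_image[symmetric])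
      finally show ?thesis .
    qed
    hence "(a ^^ n') ` (ig ` Ij) = ig ` Ij" using n'(2) by simp
    hence aigIj: "a ` (ig ` Ij) = ig ` Ij" using stab[OF sigIj _ n'(1)] by blast
    have ggig: "g ` ig ` Ij = Ij"
    proof -
      have "g ` ig ` Ij = (\<lambda>p. g (ig p)) ` Ij" by (rule image_image)
      also have "\<dots> = (\<lambda>p. p) ` Ij"
        by (rule image_cong[OF refl]) (use gig' IjD in blast)
      finally show ?thesis by simp
    qed
    have bIj: "b ` Ij = Ij"
    proof -
      have "b ` Ij = g ` a ` ig ` Ij" unfolding b_def by (simp add: image_comp)
      thus ?thesis using aigIj ggig by simp
    qed
    have "Ij = g ` I"
      by (rule irred_sub[OF bb gID gimg[OF I] girr[OF I] sIj IjsubgI bIj])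
    thus ?thesis using Ij(1) by blast
  qed
qed


end
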